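(* Let $n\in\mathbb{N}_0$, $k\in\mathbb{N}$ and $\lambda\in\mathbb{C}\setminus\{0\}$. Then $$E_{n}^{\ast(-k)}(\lambda)=\frac{k!\,2^{n-k}}{\lambda^{k}}\,y_{3}\!\left(n,k;\lambda^{2};\frac12,-\frac12\right).$$
   Context: For $k\in\mathbb{N}_0$ and $\lambda\ne0$, the second kind Apostol type Euler numbers of order $-k$ are defined by $$\left(\frac{\lambda e^{t}+\lambda^{-1}e^{-t}}{2}\right)^{k}=\sum_{n=0}^{\infty}E_{n}^{\ast(-k)}(\lambda)\frac{t^{n}}{n!}.$$ For $a,b\in\mathbb{R}$, $\mu\in\mathbb{C}$, $k\in\mathbb{N}_0$, the numbers $y_3(n,k;\mu;a,b)$ are defined by $\frac{e^{bkt}}{k!}(\mu e^{(a-b)t}+1)^{k}=\sum_{n\ge0}y_{3}(n,k;\mu;a,b)\frac{t^{n}}{n!}$. *)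

theory Defs
  imports "HOL-Analysis.Analysis" "HOL-Computational_Algebra.Formal_Power_Series"
begin

text \<open>Generating functions are treated as formal power series in t;
 e^{c t} is fps_exp c.\<close>

definition apostol_euler2_neg :: "nat \<Rightarrow> nat \<Rightarrow> complex \<Rightarrow> complex" where
  "apostol_euler2_neg n k lam =
     fact n * fps_nth
       (((fps_const lam * fps_exp 1 + fps_const (inverse lam) * fps_exp (-1)) / fps_const 2) ^ k) n"

definition y3 :: "nat \<Rightarrow> nat \<Rightarrow> complex \<Rightarrow> real \<Rightarrow> real \<Rightarrow> complex" where
  "y3 n k \<mu> a b =
     fact n * fps_nth
       (fps_const (1 / fact k) * fps_exp (complex_of_real (b * real k))
          * (fps_const \<mu> * fps_exp (complex_of_real (a - b)) + 1) ^ k) n"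

end

theory Submission
  imports Defs
begin

lemma alg_helper: "(f::complex) * (b * (1 / (c * d)) * (e * y)) = b * (e / c) / d * (f * y)"
  by (simp add: field_simps)

theorem mainTheorem7:
  fixes n k :: nat and lam :: complex
  assumes "k \<ge> 1" and "lam \<noteq> 0"
  shows "apostol_euler2_neg n k lam =
    fact k * 2 powi (int n - int k) / lam ^ k * y3 n k (lam^2) (1/2) (-1/2)"
proof -
  define C :: "complex fps" where "C = fps_const 2 * fps_X"
  have C0: "fps_nth C 0 = 0" by (simp add: C_def)
  define Y :: "complex fps" where "Y = fps_const (1 / fact k) * fps_exp (- of_nat k / 2)
          * (fps_const (lam^2) * fps_exp 1 + 1) ^ k"
  have y3eq: "y3 n k (lam^2) (1/2) (-1/2) = fact n * fps_nth Y n"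
    unfolding y3_def Y_def by simp
  have YC: "Y oo C = fps_const (1 / fact k) * fps_exp (- of_nat k)
          * (fps_const (lam^2) * fps_exp 2 + 1) ^ k"
  proof -
    have "Y oo C = fps_const (1 / fact k) * (fps_exp (- of_nat k / 2) oo C)
          * ((fps_const (lam^2) * (fps_exp 1 oo C) + 1) ^ k)"
      unfolding Y_def
      by (simp add: fps_compose_mult_distrib[OF C0] fps_compose_add_distrib
          fps_compose_power[OF C0, symmetric])
    then show ?thesis by (simp add: C_def)
  qed
  have base: "(fps_const lam * fps_exp 1 + fps_const (inverse lam) * fps_exp (-1)) / fps_const 2
     = fps_const (inverse (2*lam)) * fps_exp (-1) * (fps_const (lam^2) * fps_exp 2 + 1)"
  proof -
    have e: "fps_exp (-1) * fps_exp 2 = (fps_exp 1 :: complex fps)"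
      by (simp flip: fps_exp_add_mult)
    have "fps_const (inverse (2*lam)) * fps_exp (-1) * (fps_const (lam^2) * fps_exp 2 + 1)
       = fps_const (inverse (2*lam) * lam^2) * (fps_exp (-1) * fps_exp 2)
         + fps_const (inverse (2*lam)) * fps_exp (-1 :: complex)"
      by (simp add: algebra_simps fps_const_mult[symmetric] del: fps_const_mult)
    also have "\<dots> = fps_const (lam/2) * fps_exp 1 + fps_const (inverse lam / 2) * fps_exp (-1)"
      using assms(2) by (simp add: e power2_eq_square field_simps)
    also have "\<dots> = (fps_const lam * fps_exp 1 + fps_const (inverse lam) * fps_exp (-1)) / fps_const 2"
    proof -
      have h1: "fps_const (lam/2) = fps_const lam * fps_const (inverse 2)"
        and h2: "fps_const (inverse lam/2) = fps_const (inverse lam) * fps_const (inverse 2)"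
        by (simp_all flip: fps_const_mult)
      show ?thesis by (simp only: h1 h2 divide_fps_const distrib_left ac_simps)
    qed
    finally show ?thesis by simp
  qed
  have A: "((fps_const lam * fps_exp 1 + fps_const (inverse lam) * fps_exp (-1)) / fps_const 2) ^ k
     = fps_const (fact k * inverse (2*lam) ^ k) * (Y oo C)"
  proof -
    have "fps_exp (- of_nat k) = (fps_exp (-1) :: complex fps) ^ k"
      by (simp add: fps_exp_power_mult)
    then show ?thesis
      unfolding base YC
      by (simp add: power_mult_distrib fps_const_power[symmetric] fps_const_mult[symmetric]
           del: fps_const_power fps_const_mult)
  qed
  have E: "apostol_euler2_neg n k lam = fact n * (fact k * inverse (2*lam) ^ k * (2 ^ n * fps_nth Y n))"
    unfolding apostol_euler2_neg_def A by (simp add: C_def)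
  have p: "(2::complex) powi (int n - int k) = 2 ^ n / 2 ^ k"
    by (simp add: power_int_diff)
  have I: "inverse (2*lam) ^ k = 1 / (2 ^ k * lam ^ k)"
    by (simp only: inverse_eq_divide power_one_over power_mult_distrib)
  show ?thesis
    unfolding y3eq p E I by (rule alg_helper)
qed

end
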